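(* For every $a\geq 0$, the space $\mathcal{A}_a$ has the following properties: (i) the set of all polynomials is dense in $\mathcal{A}_a$; (ii) on every bounded subset $B\subset \mathcal{A}_a$, the relative topology induced by the topology $\mathcal{T}_a$ coincides with the relative topology of uniform convergence on compact subsets of $\mathbb{C}$; (iii) for every $b\geq 0$, every $f\in \mathcal{A}_a$ and every $g\in\mathcal{A}_b$, the product $fg$ belongs to $\mathcal{A}_{a+b}$.
   Context: Let $\mathcal{E}$ denote the set of all entire functions $\mathbb{C}\to\mathbb{C}$. For $b>0$ and $f\in\mathcal{E}$ put $\|f\|_b=\sup_{k\in\mathbb{N}_0} b^{-k}|f^{(k)}(0)|$, where $\mathbb{N}_0=\{0,1,2,\dots\}$. For $a\geq 0$ let $\mathcal{A}_a=\{f\in\mathcal{E}: \|f\|_b<\infty \text{ for all } b>a\}$, equipped with the locally convex topology $\mathcal{T}_a$ generated by the family of norms $\{\|\cdot\|_b: b>a\}$. A subset $B\subset\mathcal{A}_a$ is bounded in $\mathcal{A}_a$ if for every $b>a$ there is $C_b$ with $\sup_{f\in B}\|f\|_b\leq C_b$. *)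

theory Defs
  imports "HOL-Analysis.Analysis"
begin

definition entire :: "(complex \<Rightarrow> complex) set" where
  "entire = {f. f holomorphic_on UNIV}"

definition coef_seq :: "real \<Rightarrow> (complex \<Rightarrow> complex) \<Rightarrow> nat \<Rightarrow> real" where
  "coef_seq b f k = cmod ((deriv ^^ k) f 0) / b ^ k"

text \<open>The norm ||f||_b = sup_k b^(-k) |f^(k)(0)|; meaningful (finite) when the
  sequence is bounded above, which is encoded by the predicate norm_finite.\<close>
definition norm_b :: "real \<Rightarrow> (complex \<Rightarrow> complex) \<Rightarrow> real" where
  "norm_b b f = (SUP k. coef_seq b f k)"

definition norm_finite :: "real \<Rightarrow> (complex \<Rightarrow> complex) \<Rightarrow> bool" where
  "norm_finite b f \<longleftrightarrow> bdd_above (range (coef_seq b f))"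

definition A_space :: "real \<Rightarrow> (complex \<Rightarrow> complex) set" where
  "A_space a = {f \<in> entire. \<forall>b>a. norm_finite b f}"

definition T_topology :: "real \<Rightarrow> (complex \<Rightarrow> complex) topology" where
  "T_topology a = topology (\<lambda>U. U \<subseteq> A_space a \<and>
     (\<forall>f\<in>U. \<exists>F \<epsilon>. finite F \<and> F \<subseteq> {a<..} \<and> \<epsilon> > 0 \<and>
        {g \<in> A_space a. \<forall>b\<in>F. norm_b b (\<lambda>z. g z - f z) < \<epsilon>} \<subseteq> U))"

definition compact_conv_topology :: "(complex \<Rightarrow> complex) topology" where
  "compact_conv_topology = topology (\<lambda>U. U \<subseteq> entire \<and>
     (\<forall>f\<in>U. \<exists>K \<epsilon>. compact K \<and> \<epsilon> > 0 \<and>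
        {g \<in> entire. \<forall>z\<in>K. cmod (g z - f z) < \<epsilon>} \<subseteq> U))"

definition A_bounded :: "real \<Rightarrow> (complex \<Rightarrow> complex) set \<Rightarrow> bool" where
  "A_bounded a B \<longleftrightarrow> B \<subseteq> A_space a \<and>
     (\<forall>b>a. \<exists>C. \<forall>f\<in>B. norm_b b f \<le> C)"

definition polynomials :: "(complex \<Rightarrow> complex) set" where
  "polynomials = {(\<lambda>z. poly p z) | p. True}"

end

theory Submission imports Defs "HOL-Complex_Analysis.Complex_Analysis" "HOL-Computational_Algebra.Polynomial" begin

lemma hd_diff:
  assumes "f \<in> entire" "g \<in> entire"
  shows "(deriv ^^ k) (\<lambda>z. f z - g z) 0 = (deriv ^^ k) f 0 - (deriv ^^ k) g 0"
  using assms by (intro higher_deriv_diff[where S=UNIV]) (auto simp: entire_def)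

lemma entire_diff: "f \<in> entire \<Longrightarrow> g \<in> entire \<Longrightarrow> (\<lambda>z. f z - g z) \<in> entire"
  by (auto simp: entire_def intro!: holomorphic_intros)

lemma coef_nonneg: "b \<ge> 0 \<Longrightarrow> coef_seq b f k \<ge> 0"
  by (simp add: coef_seq_def)

lemma coef_le_norm: "norm_finite b f \<Longrightarrow> coef_seq b f k \<le> norm_b b f"
  unfolding norm_finite_def norm_b_def by (rule cSUP_upper) auto

lemma norm_le: "(\<And>k. coef_seq b f k \<le> M) \<Longrightarrow> norm_b b f \<le> M"
  unfolding norm_b_def by (rule cSUP_least) auto

lemma norm_nonneg': "b \<ge> 0 \<Longrightarrow> norm_finite b f \<Longrightarrow> norm_b b f \<ge> 0"
  using coef_nonneg coef_le_norm order_trans by blast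

lemma coef_diff_le:
  assumes "f \<in> entire" "g \<in> entire" "b > 0"
  shows "coef_seq b (\<lambda>z. f z - g z) k \<le> coef_seq b f k + coef_seq b g k"
proof -
  have "cmod ((deriv ^^ k) f 0 - (deriv ^^ k) g 0) \<le> cmod ((deriv ^^ k) f 0) + cmod ((deriv ^^ k) g 0)"
    by (rule norm_triangle_ineq4)
  then have "cmod ((deriv ^^ k) f 0 - (deriv ^^ k) g 0) / b^k \<le> (cmod ((deriv ^^ k) f 0) + cmod ((deriv ^^ k) g 0)) / b^k"
    using assms by (intro divide_right_mono) auto
  then show ?thesis using assms
    by (simp add: coef_seq_def hd_diff add_divide_distrib)
qed

lemma finite_diff:
  assumes "f \<in> entire" "g \<in> entire" "b > 0" "norm_finite b f" "norm_finite b g"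
  shows "norm_finite b (\<lambda>z. f z - g z)"
proof -
  have "coef_seq b (\<lambda>z. f z - g z) k \<le> norm_b b f + norm_b b g" for k
    using coef_diff_le[OF assms(1-3), of k] coef_le_norm[OF assms(4), of k] coef_le_norm[OF assms(5), of k]
    by linarith
  then show ?thesis unfolding norm_finite_def by (rule bdd_aboveI2)
qed

lemma A_diff: "f \<in> A_space a \<Longrightarrow> g \<in> A_space a \<Longrightarrow> a \<ge> 0 \<Longrightarrow> (\<lambda>z. f z - g z) \<in> A_space a"
proof -
  assume f: "f \<in> A_space a" and g: "g \<in> A_space a" and a: "a \<ge> 0"
  have e: "f \<in> entire" "g \<in> entire" using f g by (auto simp: A_space_def)
  have "norm_finite b (\<lambda>z. f z - g z)" if "b > a" for b
    using finite_diff[OF e, of b] f g that a by (auto simp: A_space_def)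
  then show ?thesis using entire_diff[OF e] by (auto simp: A_space_def)
qed

lemma A_entire: "f \<in> A_space a \<Longrightarrow> f \<in> entire"
  by (simp add: A_space_def)

lemma triangle:
  assumes "h \<in> A_space a" "g \<in> A_space a" "f \<in> A_space a" "b > a" "a \<ge> 0"
  shows "norm_b b (\<lambda>z. h z - f z) \<le> norm_b b (\<lambda>z. h z - g z) + norm_b b (\<lambda>z. g z - f z)"
proof (rule norm_le)
  fix k
  have e: "h \<in> entire" "g \<in> entire" "f \<in> entire" using assms A_entire by auto
  have b: "b > 0" using assms by linarith
  have fin1: "norm_finite b (\<lambda>z. h z - g z)" "norm_finite b (\<lambda>z. g z - f z)"
    using A_diff[OF assms(1,2,5)] A_diff[OF assms(2,3,5)] assms(4) by (auto simp: A_space_def)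
  have "(deriv ^^ k) (\<lambda>z. h z - f z) 0 = (deriv ^^ k) (\<lambda>z. h z - g z) 0 + (deriv ^^ k) (\<lambda>z. g z - f z) 0"
    using e by (simp add: hd_diff)
  then have "coef_seq b (\<lambda>z. h z - f z) k \<le> coef_seq b (\<lambda>z. h z - g z) k + coef_seq b (\<lambda>z. g z - f z) k"
  proof -
    have "cmod ((deriv ^^ k) (\<lambda>z. h z - f z) 0) / b^k \<le> (cmod ((deriv ^^ k) (\<lambda>z. h z - g z) 0) + cmod ((deriv ^^ k) (\<lambda>z. g z - f z) 0)) / b^k"
      using b \<open>(deriv ^^ k) (\<lambda>z. h z - f z) 0 = _\<close> by (intro divide_right_mono) (auto simp: norm_triangle_ineq)
    then show ?thesis by (simp add: coef_seq_def add_divide_distrib)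
  qed
  also have "\<dots> \<le> norm_b b (\<lambda>z. h z - g z) + norm_b b (\<lambda>z. g z - f z)"
    using coef_le_norm[OF fin1(1)] coef_le_norm[OF fin1(2)] by (intro add_mono)
  finally show "coef_seq b (\<lambda>z. h z - f z) k \<le> norm_b b (\<lambda>z. h z - g z) + norm_b b (\<lambda>z. g z - f z)" .
qed

lemma zero_norm: "norm_b b (\<lambda>z. f z - f z) = 0"
proof -
  have "coef_seq b (\<lambda>z. f z - f z) = (\<lambda>k. 0)"
    by (rule ext) (simp add: coef_seq_def)
  then show ?thesis by (simp add: norm_b_def)
qed

lemma zero_norm': "norm_b b (\<lambda>z. 0) = 0"
  using zero_norm[of b "\<lambda>z. 0"] by simp

definition NT where "NT a f F e = {g \<in> A_space a. \<forall>b\<in>F. norm_b b (\<lambda>z. g z - f z) < e}"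
definition NC where "NC f K e = {g \<in> entire. \<forall>z\<in>K. cmod (g z - f z) < e}"

lemma istop_T: "istopology (\<lambda>U. U \<subseteq> A_space a \<and>
     (\<forall>f\<in>U. \<exists>F \<epsilon>. finite F \<and> F \<subseteq> {a<..} \<and> \<epsilon> > 0 \<and>
        {g \<in> A_space a. \<forall>b\<in>F. norm_b b (\<lambda>z. g z - f z) < \<epsilon>} \<subseteq> U))"
  unfolding istopology_def
proof (rule conjI; intro allI impI)
  fix S T :: "(complex \<Rightarrow> complex) set"
  assume S: "S \<subseteq> A_space a \<and> (\<forall>f\<in>S. \<exists>F \<epsilon>. finite F \<and> F \<subseteq> {a<..} \<and> \<epsilon> > 0 \<and>
        {g \<in> A_space a. \<forall>b\<in>F. norm_b b (\<lambda>z. g z - f z) < \<epsilon>} \<subseteq> S)"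
     and T: "T \<subseteq> A_space a \<and> (\<forall>f\<in>T. \<exists>F \<epsilon>. finite F \<and> F \<subseteq> {a<..} \<and> \<epsilon> > 0 \<and>
        {g \<in> A_space a. \<forall>b\<in>F. norm_b b (\<lambda>z. g z - f z) < \<epsilon>} \<subseteq> T)"
  show "S \<inter> T \<subseteq> A_space a \<and> (\<forall>f\<in>S \<inter> T. \<exists>F \<epsilon>. finite F \<and> F \<subseteq> {a<..} \<and> \<epsilon> > 0 \<and>
        {g \<in> A_space a. \<forall>b\<in>F. norm_b b (\<lambda>z. g z - f z) < \<epsilon>} \<subseteq> S \<inter> T)"
  proof (intro conjI ballI)
    show "S \<inter> T \<subseteq> A_space a" using S by blast
    fix f assume "f \<in> S \<inter> T"
    then have fS: "f \<in> S" and fT: "f \<in> T" by auto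
    obtain F1 e1 where 1: "finite F1" "F1 \<subseteq> {a<..}" "e1 > 0"
        "{g \<in> A_space a. \<forall>b\<in>F1. norm_b b (\<lambda>z. g z - f z) < e1} \<subseteq> S"
      using bspec[OF conjunct2[OF S] fS] by blast
    obtain F2 e2 where 2: "finite F2" "F2 \<subseteq> {a<..}" "e2 > 0"
        "{g \<in> A_space a. \<forall>b\<in>F2. norm_b b (\<lambda>z. g z - f z) < e2} \<subseteq> T"
      using bspec[OF conjunct2[OF T] fT] by blast
    show "\<exists>F \<epsilon>. finite F \<and> F \<subseteq> {a<..} \<and> \<epsilon> > 0 \<and>
        {g \<in> A_space a. \<forall>b\<in>F. norm_b b (\<lambda>z. g z - f z) < \<epsilon>} \<subseteq> S \<inter> T"
    proof (rule exI[of _ "F1 \<union> F2"], rule exI[of _ "min e1 e2"], intro conjI)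
      show "{g \<in> A_space a. \<forall>b\<in>F1 \<union> F2. norm_b b (\<lambda>z. g z - f z) < min e1 e2} \<subseteq> S \<inter> T"
      proof
        fix g assume g: "g \<in> {g \<in> A_space a. \<forall>b\<in>F1 \<union> F2. norm_b b (\<lambda>z. g z - f z) < min e1 e2}"
        then have "g \<in> S" using 1(4) by auto
        moreover have "g \<in> T" using g 2(4) by auto
        ultimately show "g \<in> S \<inter> T" by blast
      qed
    qed (use 1 2 in auto)
  qed
next
  fix K :: "(complex \<Rightarrow> complex) set set"
  assume H: "\<forall>S\<in>K. S \<subseteq> A_space a \<and> (\<forall>f\<in>S. \<exists>F \<epsilon>. finite F \<and> F \<subseteq> {a<..} \<and> \<epsilon> > 0 \<and>
        {g \<in> A_space a. \<forall>b\<in>F. norm_b b (\<lambda>z. g z - f z) < \<epsilon>} \<subseteq> S)"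
  then show "\<Union>K \<subseteq> A_space a \<and> (\<forall>f\<in>\<Union>K. \<exists>F \<epsilon>. finite F \<and> F \<subseteq> {a<..} \<and> \<epsilon> > 0 \<and>
        {g \<in> A_space a. \<forall>b\<in>F. norm_b b (\<lambda>z. g z - f z) < \<epsilon>} \<subseteq> \<Union>K)"
  proof (intro conjI ballI)
    show "\<Union>K \<subseteq> A_space a" using H by blast
    fix f assume "f \<in> \<Union>K"
    then obtain S where S: "S \<in> K" "f \<in> S" by blast
    obtain F \<epsilon> where FE: "finite F" "F \<subseteq> {a<..}" "\<epsilon> > 0" "{g \<in> A_space a. \<forall>b\<in>F. norm_b b (\<lambda>z. g z - f z) < \<epsilon>} \<subseteq> S"
      using bspec[OF conjunct2[OF bspec[OF H S(1)]] S(2)] by blast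
    have "S \<subseteq> \<Union>K" using S(1) by blast
    then show "\<exists>F \<epsilon>. finite F \<and> F \<subseteq> {a<..} \<and> \<epsilon> > 0 \<and>
        {g \<in> A_space a. \<forall>b\<in>F. norm_b b (\<lambda>z. g z - f z) < \<epsilon>} \<subseteq> \<Union>K"
      using FE by (intro exI[of _ F] exI[of _ \<epsilon>]) auto
  qed
qed

lemma openin_T: "openin (T_topology a) U \<longleftrightarrow> U \<subseteq> A_space a \<and>
     (\<forall>f\<in>U. \<exists>F \<epsilon>. finite F \<and> F \<subseteq> {a<..} \<and> \<epsilon> > 0 \<and> NT a f F \<epsilon> \<subseteq> U)"
  unfolding T_topology_def NT_def by (subst topology_inverse'[OF istop_T]) (rule refl)

lemma istop_C: "istopology (\<lambda>U. U \<subseteq> entire \<and>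
     (\<forall>f\<in>U. \<exists>K \<epsilon>. compact K \<and> \<epsilon> > 0 \<and>
        {g \<in> entire. \<forall>z\<in>K. cmod (g z - f z) < \<epsilon>} \<subseteq> U))"
  unfolding istopology_def
proof (rule conjI; intro allI impI)
  fix S T :: "(complex \<Rightarrow> complex) set"
  assume S: "S \<subseteq> entire \<and> (\<forall>f\<in>S. \<exists>K \<epsilon>. compact K \<and> \<epsilon> > 0 \<and>
        {g \<in> entire. \<forall>z\<in>K. cmod (g z - f z) < \<epsilon>} \<subseteq> S)"
     and T: "T \<subseteq> entire \<and> (\<forall>f\<in>T. \<exists>K \<epsilon>. compact K \<and> \<epsilon> > 0 \<and>
        {g \<in> entire. \<forall>z\<in>K. cmod (g z - f z) < \<epsilon>} \<subseteq> T)"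
  show "S \<inter> T \<subseteq> entire \<and> (\<forall>f\<in>S \<inter> T. \<exists>K \<epsilon>. compact K \<and> \<epsilon> > 0 \<and>
        {g \<in> entire. \<forall>z\<in>K. cmod (g z - f z) < \<epsilon>} \<subseteq> S \<inter> T)"
  proof (intro conjI ballI)
    show "S \<inter> T \<subseteq> entire" using S by blast
    fix f assume "f \<in> S \<inter> T"
    then have fS: "f \<in> S" and fT: "f \<in> T" by auto
    obtain K1 e1 where 1: "compact K1" "e1 > 0"
        "{g \<in> entire. \<forall>z\<in>K1. cmod (g z - f z) < e1} \<subseteq> S"
      using bspec[OF conjunct2[OF S] fS] by blast
    obtain K2 e2 where 2: "compact K2" "e2 > 0"
        "{g \<in> entire. \<forall>z\<in>K2. cmod (g z - f z) < e2} \<subseteq> T"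
      using bspec[OF conjunct2[OF T] fT] by blast
    show "\<exists>K \<epsilon>. compact K \<and> \<epsilon> > 0 \<and>
        {g \<in> entire. \<forall>z\<in>K. cmod (g z - f z) < \<epsilon>} \<subseteq> S \<inter> T"
    proof (rule exI[of _ "K1 \<union> K2"], rule exI[of _ "min e1 e2"], intro conjI)
      show "{g \<in> entire. \<forall>z\<in>K1 \<union> K2. cmod (g z - f z) < min e1 e2} \<subseteq> S \<inter> T"
      proof
        fix g assume g: "g \<in> {g \<in> entire. \<forall>z\<in>K1 \<union> K2. cmod (g z - f z) < min e1 e2}"
        then have "g \<in> S" using 1(3) by auto
        moreover have "g \<in> T" using g 2(3) by auto
        ultimately show "g \<in> S \<inter> T" by blast
      qed
    qed (use 1 2 in \<open>auto simp: compact_Un\<close>)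
  qed
next
  fix K :: "(complex \<Rightarrow> complex) set set"
  assume H: "\<forall>S\<in>K. S \<subseteq> entire \<and> (\<forall>f\<in>S. \<exists>K \<epsilon>. compact K \<and> \<epsilon> > 0 \<and>
        {g \<in> entire. \<forall>z\<in>K. cmod (g z - f z) < \<epsilon>} \<subseteq> S)"
  then show "\<Union>K \<subseteq> entire \<and> (\<forall>f\<in>\<Union>K. \<exists>K' \<epsilon>. compact K' \<and> \<epsilon> > 0 \<and>
        {g \<in> entire. \<forall>z\<in>K'. cmod (g z - f z) < \<epsilon>} \<subseteq> \<Union>K)"
  proof (intro conjI ballI)
    show "\<Union>K \<subseteq> entire" using H by blast
    fix f assume "f \<in> \<Union>K"
    then obtain S where S: "S \<in> K" "f \<in> S" by blast
    obtain C \<epsilon> where FE: "compact C" "\<epsilon> > 0" "{g \<in> entire. \<forall>z\<in>C. cmod (g z - f z) < \<epsilon>} \<subseteq> S"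
      using bspec[OF conjunct2[OF bspec[OF H S(1)]] S(2)] by blast
    have "S \<subseteq> \<Union>K" using S(1) by blast
    then show "\<exists>K' \<epsilon>. compact K' \<and> \<epsilon> > 0 \<and>
        {g \<in> entire. \<forall>z\<in>K'. cmod (g z - f z) < \<epsilon>} \<subseteq> \<Union>K"
      using FE by (intro exI[of _ C] exI[of _ \<epsilon>]) auto
  qed
qed

lemma openin_C: "openin compact_conv_topology U \<longleftrightarrow> U \<subseteq> entire \<and>
     (\<forall>f\<in>U. \<exists>K \<epsilon>. compact K \<and> \<epsilon> > 0 \<and> NC f K \<epsilon> \<subseteq> U)"
  unfolding compact_conv_topology_def NC_def by (subst topology_inverse'[OF istop_C]) (rule refl)

lemma topspace_T: "topspace (T_topology a) = A_space a"
proof -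
  have "\<forall>f\<in>A_space a. finite {} \<and> {} \<subseteq> {a<..} \<and> (0::real) < 1 \<and> NT a f {} 1 \<subseteq> A_space a"
    by (auto simp: NT_def)
  then have "openin (T_topology a) (A_space a)"
    unfolding openin_T by blast
  then show ?thesis unfolding topspace_def using openin_T by blast
qed


lemma NT_self: "f \<in> A_space a \<Longrightarrow> \<epsilon> > 0 \<Longrightarrow> f \<in> NT a f F \<epsilon>"
  by (simp add: NT_def zero_norm')

lemma NT_open:
  assumes a: "a \<ge> 0" and f: "f \<in> A_space a" and F: "finite F" "F \<subseteq> {a<..}" and e: "\<epsilon> > 0"
  shows "openin (T_topology a) (NT a f F \<epsilon>)"
  unfolding openin_T
proof (intro conjI ballI)
  show "NT a f F \<epsilon> \<subseteq> A_space a" by (auto simp: NT_def)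
  fix g assume g: "g \<in> NT a f F \<epsilon>"
  define S where "S = insert 1 ((\<lambda>b. \<epsilon> - norm_b b (\<lambda>z. g z - f z)) ` F)"
  have S: "finite S" "S \<noteq> {}" using F by (auto simp: S_def)
  define \<delta> where "\<delta> = Min S"
  have "\<forall>x\<in>S. 0 < x" using g by (auto simp: S_def NT_def)
  then have d: "\<delta> > 0" unfolding \<delta>_def using Min_gr_iff[OF S] by blast
  have dle: "\<delta> \<le> \<epsilon> - norm_b b (\<lambda>z. g z - f z)" if "b \<in> F" for b
    unfolding \<delta>_def using S(1) that by (intro Min_le) (auto simp: S_def)
  have "NT a g F \<delta> \<subseteq> NT a f F \<epsilon>"
  proof
    fix h assume h: "h \<in> NT a g F \<delta>"
    have hA: "h \<in> A_space a" and gA: "g \<in> A_space a" using h g by (auto simp: NT_def)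
    have "norm_b b (\<lambda>z. h z - f z) < \<epsilon>" if b: "b \<in> F" for b
    proof -
      have "norm_b b (\<lambda>z. h z - f z) \<le> norm_b b (\<lambda>z. h z - g z) + norm_b b (\<lambda>z. g z - f z)"
        using triangle[OF hA gA f _ a] b F(2) by auto
      moreover have "norm_b b (\<lambda>z. h z - g z) < \<delta>" using h b by (auto simp: NT_def)
      ultimately show ?thesis using dle[OF b] by linarith
    qed
    then show "h \<in> NT a f F \<epsilon>" using hA by (auto simp: NT_def)
  qed
  then show "\<exists>F' \<epsilon>'. finite F' \<and> F' \<subseteq> {a<..} \<and> \<epsilon>' > 0 \<and> NT a g F' \<epsilon>' \<subseteq> NT a f F \<epsilon>"
    using F d by blast
qed

lemma NC_self: "f \<in> entire \<Longrightarrow> \<epsilon> > 0 \<Longrightarrow> f \<in> NC f K \<epsilon>"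
  by (simp add: NC_def)

lemma NC_open:
  assumes f: "f \<in> entire" and K: "compact K" and e: "\<epsilon> > 0"
  shows "openin compact_conv_topology (NC f K \<epsilon>)"
  unfolding openin_C
proof (intro conjI ballI)
  show "NC f K \<epsilon> \<subseteq> entire" by (auto simp: NC_def)
  fix g assume g: "g \<in> NC f K \<epsilon>"
  show "\<exists>K' \<epsilon>'. compact K' \<and> \<epsilon>' > 0 \<and> NC g K' \<epsilon>' \<subseteq> NC f K \<epsilon>"
  proof (cases "K = {}")
    case True
    then have "NC g K 1 \<subseteq> NC f K \<epsilon>" by (auto simp: NC_def)
    then show ?thesis using K by (intro exI[of _ K] exI[of _ 1]) simp
  next
    case False
    have ge: "g \<in> entire" using g by (auto simp: NC_def)
    have "(\<lambda>z. g z - f z) holomorphic_on UNIV"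
      using entire_diff[OF ge f] by (simp add: entire_def)
    then have "continuous_on UNIV (\<lambda>z. g z - f z)"
      by (rule holomorphic_on_imp_continuous_on)
    then have "continuous_on K (\<lambda>z. cmod (g z - f z))"
      by (rule continuous_on_norm[OF continuous_on_subset]) simp
    then obtain z0 where z0: "z0 \<in> K" "\<forall>y\<in>K. cmod (g y - f y) \<le> cmod (g z0 - f z0)"
      using continuous_attains_sup[OF K False \<open>continuous_on K (\<lambda>z. cmod (g z - f z))\<close>] by blast
    define \<delta> where "\<delta> = \<epsilon> - cmod (g z0 - f z0)"
    have d: "\<delta> > 0" using g z0(1) by (auto simp: NC_def \<delta>_def)
    have "NC g K \<delta> \<subseteq> NC f K \<epsilon>"
    proof
      fix h assume h: "h \<in> NC g K \<delta>"
      have "cmod (h z - f z) < \<epsilon>" if z: "z \<in> K" for z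
      proof -
        have "cmod (h z - f z) \<le> cmod (h z - g z) + cmod (g z - f z)"
          using norm_triangle_ineq[of "h z - g z" "g z - f z"] by simp
        moreover have "cmod (h z - g z) < \<delta>" using h z by (auto simp: NC_def)
        moreover have "cmod (g z - f z) \<le> cmod (g z0 - f z0)" using z0(2) z by blast
        ultimately show ?thesis unfolding \<delta>_def by linarith
      qed
      then show "h \<in> NC f K \<epsilon>" using h by (auto simp: NC_def)
    qed
    then show ?thesis using K d by (intro exI[of _ K] exI[of _ \<delta>]) simp
  qed
qed

lemma subtop_eq:
  assumes XY: "\<And>V f. openin X V \<Longrightarrow> f \<in> V \<Longrightarrow> f \<in> B \<Longrightarrow> \<exists>W. openin Y W \<and> f \<in> W \<and> W \<inter> B \<subseteq> V"
      and YX: "\<And>V f. openin Y V \<Longrightarrow> f \<in> V \<Longrightarrow> f \<in> B \<Longrightarrow> \<exists>W. openin X W \<and> f \<in> W \<and> W \<inter> B \<subseteq> V"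
  shows "subtopology X B = subtopology Y B"
proof -
  have *: "openin (subtopology Q B) U"
    if H: "\<And>V f. openin P V \<Longrightarrow> f \<in> V \<Longrightarrow> f \<in> B \<Longrightarrow> \<exists>W. openin Q W \<and> f \<in> W \<and> W \<inter> B \<subseteq> V"
      and U: "openin (subtopology P B) U" for P Q U
  proof -
    obtain V where V: "openin P V" "U = V \<inter> B" using U by (auto simp: openin_subtopology)
    show ?thesis
    proof (subst openin_subopen, intro ballI)
      fix f assume "f \<in> U"
      then obtain W where W: "openin Q W" "f \<in> W" "W \<inter> B \<subseteq> V" using H[OF V(1)] V(2) by blast
      have "openin (subtopology Q B) (W \<inter> B)" using W(1) by (auto simp: openin_subtopology)
      moreover have "f \<in> W \<inter> B" "W \<inter> B \<subseteq> U" using W V(2) \<open>f \<in> U\<close> by auto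
      ultimately show "\<exists>T. openin (subtopology Q B) T \<and> f \<in> T \<and> T \<subseteq> U" by blast
    qed
  qed
  show ?thesis unfolding topology_eq
    using *[of X Y, OF XY] *[of Y X, OF YX] by blast
qed

lemma cauchy_est:
  assumes h: "h \<in> entire" and bd: "\<forall>z\<in>cball 0 1. cmod (h z) < \<delta>"
  shows "cmod ((deriv ^^ k) h 0) \<le> fact k * \<delta>"
proof (cases "k = 0")
  case True
  then show ?thesis using bd by (auto intro: less_imp_le)
next
  case False
  have "cmod ((deriv ^^ k) h 0) \<le> fact k * \<delta> / 1 ^ k"
  proof (rule Cauchy_higher_deriv_bound[where y=0])
    show "h holomorphic_on ball 0 1" using h by (auto simp: entire_def intro: holomorphic_on_subset)
    show "continuous_on (cball 0 1) h" using h
      by (auto simp: entire_def intro: holomorphic_on_imp_continuous_on holomorphic_on_subset)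
    show "h w \<in> ball 0 \<delta>" if "w \<in> ball 0 1" for w using bd that by auto
  qed (use False in auto)
  then show ?thesis by simp
qed

lemma taylor_bound:
  assumes h: "h \<in> entire" and b: "b > 0" and fin: "norm_finite b h"
  shows "cmod (h z) \<le> norm_b b h * exp (b * cmod z)"
proof -
  define M where "M = norm_b b h"
  have hol: "h holomorphic_on ball 0 (cmod z + 1)" using h by (auto simp: entire_def intro: holomorphic_on_subset)
  have s: "(\<lambda>n. (deriv ^^ n) h 0 / fact n * (z - 0)^n) sums h z"
    by (rule holomorphic_power_series[OF hol]) auto
  have trm: "norm ((deriv ^^ n) h 0 / fact n * (z - 0)^n) \<le> M * ((b * cmod z)^n /\<^sub>R fact n)" for n
  proof -
    have "coef_seq b h n \<le> M" using coef_le_norm[OF fin] by (simp add: M_def)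
    then have c: "cmod ((deriv ^^ n) h 0) \<le> M * b^n" using b
      by (simp add: coef_seq_def divide_le_eq)
    have "norm ((deriv ^^ n) h 0 / fact n * (z - 0)^n) = cmod ((deriv ^^ n) h 0) * cmod z ^ n / fact n"
      by (simp add: norm_mult norm_divide norm_power)
    also have "\<dots> \<le> M * b^n * cmod z ^ n / fact n"
      using c by (intro divide_right_mono mult_right_mono) auto
    also have "\<dots> = M * ((b * cmod z)^n /\<^sub>R fact n)"
      by (simp add: power_mult_distrib field_simps)
    finally show ?thesis .
  qed
  have "cmod (h z) = norm (\<Sum>n. (deriv ^^ n) h 0 / fact n * (z - 0)^n)" using s by (simp add: sums_iff)
  also have "\<dots> \<le> (\<Sum>n. M * ((b * cmod z)^n /\<^sub>R fact n))"
    by (rule norm_suminf_le[OF trm]) (intro summable_mult exp_converges[THEN sums_summable])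
  also have "\<dots> = M * exp (b * cmod z)"
    using exp_converges[of "b * cmod z"] by (simp add: sums_iff suminf_mult)
  finally show ?thesis by (simp add: M_def)
qed


lemma coef_scale:
  assumes "0 < b'" "0 < b"
  shows "coef_seq b h k = coef_seq b' h k * (b'/b)^k"
  using assms by (simp add: coef_seq_def power_divide)

lemma KB:
  assumes a: "a \<ge> 0" and Bd: "A_bounded a B" and f: "f \<in> B" and b: "b > a" and e: "\<epsilon> > 0"
  shows "\<exists>\<delta>>0. \<forall>g\<in>B. (\<forall>z\<in>cball 0 1. cmod (g z - f z) < \<delta>) \<longrightarrow> norm_b b (\<lambda>z. g z - f z) < \<epsilon>"
proof -
  define b' where "b' = (a+b)/2"
  have b': "a < b'" "b' < b" "0 < b'" "0 < b" using a b by (auto simp: b'_def)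
  have BA: "B \<subseteq> A_space a" using Bd by (simp add: A_bounded_def)
  obtain C where C: "\<forall>g\<in>B. norm_b b' g \<le> C" using Bd b'(1) unfolding A_bounded_def by blast
  have fA: "f \<in> A_space a" using f BA by blast
  have fin: "norm_finite b' g" if "g \<in> B" for g using BA b'(1) that by (auto simp: A_space_def)
  have "0 \<le> norm_b b' f" by (rule norm_nonneg') (use b' fin f in auto)
  then have C0: "0 \<le> C" using C f by force
  define r where "r = b'/b"
  have r: "0 < r" "r < 1" using b' by (auto simp: r_def)
  have "\<exists>N. r^N < \<epsilon> / (2*(2*C+1))"
    by (rule real_arch_pow_inv) (use e C0 r in auto)
  then obtain N where N: "r^N < \<epsilon> / (2*(2*C+1))" by blast
  define S where "S = (\<Sum>k<N. fact k / b^k)"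
  have S0: "S \<ge> 0" unfolding S_def using b' by (intro sum_nonneg) auto
  define \<delta> where "\<delta> = \<epsilon> / (2*(S+1))"
  have d: "\<delta> > 0" using e S0 by (simp add: \<delta>_def)
  show ?thesis
  proof (intro exI[of _ \<delta>] conjI ballI impI)
    show "\<delta> > 0" by (rule d)
    fix g assume g: "g \<in> B" and close: "\<forall>z\<in>cball 0 1. cmod (g z - f z) < \<delta>"
    have ge: "g \<in> entire" and fe: "f \<in> entire" using g f BA by (auto simp: A_space_def)
    define h where "h = (\<lambda>z. g z - f z)"
    have he: "h \<in> entire" unfolding h_def by (rule entire_diff[OF ge fe])
    have coef_bd: "coef_seq b h k \<le> \<epsilon>/2" for k
    proof (cases "k < N")
      case True
      have "cmod ((deriv ^^ k) h 0) \<le> fact k * \<delta>"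
        by (rule cauchy_est[OF he]) (use close in \<open>simp add: h_def\<close>)
      then have "coef_seq b h k \<le> fact k * \<delta> / b^k"
        unfolding coef_seq_def using b' by (intro divide_right_mono) auto
      also have "\<dots> = (fact k / b^k) * \<delta>" by simp
      also have "\<dots> \<le> S * \<delta>"
      proof (rule mult_right_mono)
        show "fact k / b^k \<le> S" unfolding S_def
          by (rule member_le_sum) (use True b' in auto)
      qed (use d in simp)
      also have "S * \<delta> = (\<epsilon>/2) * (S/(S+1))" using S0 by (simp add: \<delta>_def)
      also have "\<dots> \<le> (\<epsilon>/2) * 1"
        using S0 e by (intro mult_left_mono) auto
      finally show ?thesis by simp
    next
      case False
      have "coef_seq b h k = coef_seq b' h k * r^k" unfolding r_def by (rule coef_scale) (use b' in auto)
      also have "\<dots> \<le> (2*C) * r^N"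
      proof (rule mult_mono)
        have "coef_seq b' h k \<le> coef_seq b' g k + coef_seq b' f k"
          unfolding h_def by (rule coef_diff_le[OF ge fe]) (use b' in auto)
        also have "\<dots> \<le> norm_b b' g + norm_b b' f"
          using coef_le_norm[OF fin[OF g]] coef_le_norm[OF fin[OF f]] by (intro add_mono)
        also have "\<dots> \<le> 2*C"
        proof -
          have "norm_b b' g \<le> C" "norm_b b' f \<le> C" using C g f by auto
          then show ?thesis by linarith
        qed
        finally show "coef_seq b' h k \<le> 2*C" .
        show "r^k \<le> r^N" using False r by (intro power_decreasing) auto
      qed (use C0 r in auto)
      also have "\<dots> \<le> (2*C+1) * r^N" using r by (intro mult_right_mono) auto
      also have "\<dots> < (2*C+1) * (\<epsilon> / (2*(2*C+1)))" using N C0 by (intro mult_strict_left_mono) auto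
      also have "\<dots> = \<epsilon>/2" using C0 by (simp add: field_simps)
      finally show ?thesis by simp
    qed
    have "norm_b b h \<le> \<epsilon>/2" by (rule norm_le[OF coef_bd])
    then show "norm_b b (\<lambda>z. g z - f z) < \<epsilon>" using e by (simp add: h_def)
  qed
qed

lemma KBF:
  assumes a: "a \<ge> 0" and Bd: "A_bounded a B" and f: "f \<in> B" and F: "finite F" "F \<subseteq> {a<..}" and e: "\<epsilon> > 0"
  shows "\<exists>\<delta>>0. \<forall>g\<in>B. (\<forall>z\<in>cball 0 1. cmod (g z - f z) < \<delta>) \<longrightarrow> (\<forall>b\<in>F. norm_b b (\<lambda>z. g z - f z) < \<epsilon>)"
  using F
proof (induction F rule: finite_induct)
  case empty
  show ?case by (intro exI[of _ 1]) simp
next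
  case (insert x F)
  then obtain d1 where d1: "d1 > 0" "\<forall>g\<in>B. (\<forall>z\<in>cball 0 1. cmod (g z - f z) < d1) \<longrightarrow> (\<forall>b\<in>F. norm_b b (\<lambda>z. g z - f z) < \<epsilon>)"
    by auto
  have "x > a" using insert.prems by auto
  then obtain d2 where d2: "d2 > 0" "\<forall>g\<in>B. (\<forall>z\<in>cball 0 1. cmod (g z - f z) < d2) \<longrightarrow> norm_b x (\<lambda>z. g z - f z) < \<epsilon>"
    using KB[OF a Bd f _ e] by blast
  show ?case
  proof (intro exI[of _ "min d1 d2"] conjI ballI impI)
    show "min d1 d2 > 0" using d1 d2 by simp
    fix g b assume g: "g \<in> B" and cl: "\<forall>z\<in>cball 0 1. cmod (g z - f z) < min d1 d2" and b: "b \<in> insert x F"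
    have cl1: "\<forall>z\<in>cball 0 1. cmod (g z - f z) < d1" and cl2: "\<forall>z\<in>cball 0 1. cmod (g z - f z) < d2"
      using cl by auto
    show "norm_b b (\<lambda>z. g z - f z) < \<epsilon>"
    proof (cases "b = x")
      case True then show ?thesis using d2(2) g cl2 by blast
    next
      case False then have "b \<in> F" using b by blast
      then show ?thesis using d1(2) g cl1 by blast
    qed
  qed
qed

lemma part2:
  assumes a: "a \<ge> 0" and Bd: "A_bounded a B"
  shows "subtopology (T_topology a) B = subtopology compact_conv_topology B"
proof (rule subtop_eq)
  have BA: "B \<subseteq> A_space a" using Bd by (simp add: A_bounded_def)
  fix V f assume V: "openin (T_topology a) V" and fV: "f \<in> V" and fB: "f \<in> B"
  obtain F \<epsilon> where F: "finite F" "F \<subseteq> {a<..}" "\<epsilon> > 0" "NT a f F \<epsilon> \<subseteq> V"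
    using V fV unfolding openin_T by blast
  obtain \<delta> where d: "\<delta> > 0" "\<forall>g\<in>B. (\<forall>z\<in>cball 0 1. cmod (g z - f z) < \<delta>) \<longrightarrow> (\<forall>b\<in>F. norm_b b (\<lambda>z. g z - f z) < \<epsilon>)"
    using KBF[OF a Bd fB F(1,2,3)] by blast
  have fe: "f \<in> entire" using fB BA by (auto simp: A_space_def)
  show "\<exists>W. openin compact_conv_topology W \<and> f \<in> W \<and> W \<inter> B \<subseteq> V"
  proof (intro exI[of _ "NC f (cball 0 1) \<delta>"] conjI)
    show "openin compact_conv_topology (NC f (cball 0 1) \<delta>)" by (rule NC_open[OF fe compact_cball d(1)])
    show "f \<in> NC f (cball 0 1) \<delta>" by (rule NC_self[OF fe d(1)])
    show "NC f (cball 0 1) \<delta> \<inter> B \<subseteq> V"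
    proof
      fix g assume g: "g \<in> NC f (cball 0 1) \<delta> \<inter> B"
      then have "\<forall>b\<in>F. norm_b b (\<lambda>z. g z - f z) < \<epsilon>" using d(2) by (auto simp: NC_def)
      moreover have "g \<in> A_space a" using g BA by blast
      ultimately have "g \<in> NT a f F \<epsilon>" by (simp add: NT_def)
      then show "g \<in> V" using F(4) by blast
    qed
  qed
next
  have BA: "B \<subseteq> A_space a" using Bd by (simp add: A_bounded_def)
  fix V f assume V: "openin compact_conv_topology V" and fV: "f \<in> V" and fB: "f \<in> B"
  obtain K \<epsilon> where K: "compact K" "\<epsilon> > 0" "NC f K \<epsilon> \<subseteq> V"
    using V fV unfolding openin_C by blast
  obtain R where R: "R > 0" "\<forall>z\<in>K. cmod z \<le> R"
    using compact_imp_bounded[OF K(1)] unfolding bounded_pos by blast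
  define b where "b = a + 1"
  have b: "b > a" "b > 0" using a by (auto simp: b_def)
  define \<eta> where "\<eta> = \<epsilon> / exp (b * R)"
  have eta: "\<eta> > 0" using K(2) by (simp add: \<eta>_def)
  have fA: "f \<in> A_space a" using fB BA by blast
  show "\<exists>W. openin (T_topology a) W \<and> f \<in> W \<and> W \<inter> B \<subseteq> V"
  proof (intro exI[of _ "NT a f {b} \<eta>"] conjI)
    show "openin (T_topology a) (NT a f {b} \<eta>)" by (rule NT_open[OF a fA]) (use b eta in auto)
    show "f \<in> NT a f {b} \<eta>" by (rule NT_self[OF fA eta])
    show "NT a f {b} \<eta> \<inter> B \<subseteq> V"
    proof
      fix g assume g: "g \<in> NT a f {b} \<eta> \<inter> B"
      have gA: "g \<in> A_space a" using g BA by blast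
      have hA: "(\<lambda>z. g z - f z) \<in> A_space a" by (rule A_diff[OF gA fA a])
      have he: "(\<lambda>z. g z - f z) \<in> entire" and hfin: "norm_finite b (\<lambda>z. g z - f z)"
        using hA b by (auto simp: A_space_def)
      have nb: "norm_b b (\<lambda>z. g z - f z) < \<eta>" using g by (simp add: NT_def)
      have nb0: "norm_b b (\<lambda>z. g z - f z) \<ge> 0" by (rule norm_nonneg') (use b hfin in auto)
      have "cmod (g z - f z) < \<epsilon>" if z: "z \<in> K" for z
      proof -
        have "cmod (g z - f z) \<le> norm_b b (\<lambda>z. g z - f z) * exp (b * cmod z)"
          using taylor_bound[OF he b(2) hfin, of z] by simp
        also have "\<dots> \<le> norm_b b (\<lambda>z. g z - f z) * exp (b * R)"
          using R(2) z b nb0 by (intro mult_left_mono) auto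
        also have "\<dots> < \<eta> * exp (b * R)"
          using nb by (intro mult_strict_right_mono) auto
        also have "\<dots> = \<epsilon>" by (simp add: \<eta>_def)
        finally show ?thesis .
      qed
      then have "g \<in> NC f K \<epsilon>" using gA by (auto simp: NC_def A_space_def)
      then show "g \<in> V" using K(3) by blast
    qed
  qed
qed


lemma deriv_poly: "deriv (poly q) = poly (pderiv q)"
  by (rule ext) (rule DERIV_imp_deriv[OF poly_DERIV])

lemma hderiv_poly: "(deriv ^^ k) (poly p) = poly ((pderiv ^^ k) p)"
  by (induction k) (simp_all add: deriv_poly)

lemma D_poly: "(deriv ^^ k) (poly p) 0 = fact k * coeff p k"
  by (simp add: hderiv_poly poly_0_coeff_0 coeff_higher_pderiv pochhammer_fact[symmetric])

lemma poly_entire: "poly (p :: complex poly) \<in> entire"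
proof -
  have "(\<lambda>z. poly p z) holomorphic_on UNIV" by (intro holomorphic_intros)
  then show ?thesis by (simp add: entire_def)
qed

lemma poly_A: "poly (p :: complex poly) \<in> A_space a" if "a \<ge> 0"
proof -
  have "norm_finite b (poly p)" if b: "b > a" for b
  proof -
    have "coef_seq b (poly p) k \<le> (\<Sum>j\<le>degree p. coef_seq b (poly p) j)" for k
    proof (cases "k \<le> degree p")
      case True
      then show ?thesis using b \<open>a \<ge> 0\<close> by (intro member_le_sum) (auto intro: coef_nonneg)
    next
      case False
      then have "coeff p k = 0" by (simp add: coeff_eq_0)
      then have "coef_seq b (poly p) k = 0" by (simp add: coef_seq_def D_poly)
      moreover have "0 \<le> (\<Sum>j\<le>degree p. coef_seq b (poly p) j)"
        using b \<open>a \<ge> 0\<close> by (intro sum_nonneg) (auto intro: coef_nonneg)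
      ultimately show ?thesis by simp
    qed
    then show ?thesis unfolding norm_finite_def by (rule bdd_aboveI2)
  qed
  then show ?thesis using poly_entire by (simp add: A_space_def)
qed

definition tp :: "(complex \<Rightarrow> complex) \<Rightarrow> nat \<Rightarrow> complex poly" where
  "tp f M = (\<Sum>k<M. monom ((deriv ^^ k) f 0 / fact k) k)"

lemma coeff_tp: "coeff (tp f M) k = (if k < M then (deriv ^^ k) f 0 / fact k else 0)"
  by (simp add: tp_def coeff_sum coeff_monom)

lemma coef_tp_diff:
  assumes "f \<in> entire"
  shows "coef_seq b (\<lambda>z. poly (tp f M) z - f z) k = (if k < M then 0 else coef_seq b f k)"
proof -
  have "(deriv ^^ k) (\<lambda>z. poly (tp f M) z - f z) 0 = (deriv ^^ k) (poly (tp f M)) 0 - (deriv ^^ k) f 0"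
    using hd_diff[OF poly_entire[of "tp f M"] assms, of k] by simp
  also have "\<dots> = (if k < M then 0 else - (deriv ^^ k) f 0)"
    by (simp add: D_poly coeff_tp)
  finally show ?thesis by (simp add: coef_seq_def)
qed

lemma TA:
  assumes a: "a \<ge> 0" and f: "f \<in> A_space a" and b: "b > a" and e: "\<epsilon> > 0"
  shows "\<exists>N. \<forall>M\<ge>N. norm_b b (\<lambda>z. poly (tp f M) z - f z) < \<epsilon>"
proof -
  define b' where "b' = (a+b)/2"
  have b': "a < b'" "b' < b" "0 < b'" "0 < b" using a b by (auto simp: b'_def)
  have fe: "f \<in> entire" and fin: "norm_finite b' f" using f b'(1) by (auto simp: A_space_def)
  define C where "C = norm_b b' f"
  have C0: "0 \<le> C" unfolding C_def by (rule norm_nonneg') (use b' fin in auto)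
  define r where "r = b'/b"
  have r: "0 < r" "r < 1" using b' by (auto simp: r_def)
  have "\<exists>N. r^N < \<epsilon> / (2*(C+1))"
    by (rule real_arch_pow_inv) (use e C0 r in auto)
  then obtain N where N: "r^N < \<epsilon> / (2*(C+1))" by blast
  show ?thesis
  proof (intro exI[of _ N] allI impI)
    fix M assume M: "M \<ge> N"
    have "coef_seq b (\<lambda>z. poly (tp f M) z - f z) k \<le> \<epsilon>/2" for k
    proof (cases "k < M")
      case True then show ?thesis using coef_tp_diff[OF fe] e by simp
    next
      case False
      have "coef_seq b (\<lambda>z. poly (tp f M) z - f z) k = coef_seq b f k" using coef_tp_diff[OF fe] False by simp
      also have "\<dots> = coef_seq b' f k * r^k" unfolding r_def by (rule coef_scale) (use b' in auto)
      also have "\<dots> \<le> C * r^N"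
      proof (rule mult_mono)
        show "coef_seq b' f k \<le> C" unfolding C_def by (rule coef_le_norm[OF fin])
        show "r^k \<le> r^N" using False M r by (intro power_decreasing) auto
      qed (use C0 r in auto)
      also have "\<dots> \<le> (C+1) * r^N" using r by (intro mult_right_mono) auto
      also have "\<dots> < (C+1) * (\<epsilon> / (2*(C+1)))" using N C0 by (intro mult_strict_left_mono) auto
      also have "\<dots> = \<epsilon>/2" using C0 by (simp add: field_simps)
      finally show ?thesis by simp
    qed
    then have "norm_b b (\<lambda>z. poly (tp f M) z - f z) \<le> \<epsilon>/2" by (rule norm_le)
    then show "norm_b b (\<lambda>z. poly (tp f M) z - f z) < \<epsilon>" using e by simp
  qed
qed

lemma TAF:
  assumes a: "a \<ge> 0" and f: "f \<in> A_space a" and F: "finite F" "F \<subseteq> {a<..}" and e: "\<epsilon> > 0"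
  shows "\<exists>N. \<forall>M\<ge>N. \<forall>b\<in>F. norm_b b (\<lambda>z. poly (tp f M) z - f z) < \<epsilon>"
  using F
proof (induction F rule: finite_induct)
  case empty then show ?case by simp
next
  case (insert x F)
  then obtain N1 where N1: "\<forall>M\<ge>N1. \<forall>b\<in>F. norm_b b (\<lambda>z. poly (tp f M) z - f z) < \<epsilon>" by auto
  have "x > a" using insert.prems by auto
  then obtain N2 where N2: "\<forall>M\<ge>N2. norm_b x (\<lambda>z. poly (tp f M) z - f z) < \<epsilon>"
    using TA[OF a f _ e] by blast
  show ?case
  proof (intro exI[of _ "max N1 N2"] allI impI ballI)
    fix M b assume M: "max N1 N2 \<le> M" and b: "b \<in> insert x F"
    show "norm_b b (\<lambda>z. poly (tp f M) z - f z) < \<epsilon>"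
    proof (cases "b = x")
      case True then show ?thesis using N2 M by auto
    next
      case False then have "b \<in> F" using b by blast
      then show ?thesis using N1 M by auto
    qed
  qed
qed

lemma part1:
  assumes a: "a \<ge> 0"
  shows "(T_topology a) closure_of polynomials = A_space a"
proof
  show "T_topology a closure_of polynomials \<subseteq> A_space a"
    using closure_of_subset_topspace[of "T_topology a" polynomials] by (simp add: topspace_T)
  show "A_space a \<subseteq> T_topology a closure_of polynomials"
  proof
    fix f assume f: "f \<in> A_space a"
    have "\<exists>y\<in>polynomials. y \<in> T" if T: "f \<in> T" "openin (T_topology a) T" for T
    proof -
      obtain F \<epsilon> where F: "finite F" "F \<subseteq> {a<..}" "\<epsilon> > 0" "NT a f F \<epsilon> \<subseteq> T"
        using T unfolding openin_T by blast
      obtain N where N: "\<forall>M\<ge>N. \<forall>b\<in>F. norm_b b (\<lambda>z. poly (tp f M) z - f z) < \<epsilon>"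
        using TAF[OF a f F(1,2,3)] by blast
      have "poly (tp f N) \<in> NT a f F \<epsilon>"
        using N poly_A[OF a] by (simp add: NT_def)
      then have "poly (tp f N) \<in> T" using F(4) by blast
      moreover have "poly (tp f N) \<in> polynomials" unfolding polynomials_def by auto
      ultimately show ?thesis by blast
    qed
    then show "f \<in> T_topology a closure_of polynomials"
      unfolding closure_of_def using f topspace_T by auto
  qed
qed

lemma part3:
  assumes a: "a \<ge> 0" and b: "b \<ge> 0" and f: "f \<in> A_space a" and g: "g \<in> A_space b"
  shows "(\<lambda>z. f z * g z) \<in> A_space (a + b)"
proof -
  have fe: "f \<in> entire" and ge: "g \<in> entire" using f g by (auto simp: A_space_def)
  have "norm_finite c (\<lambda>z. f z * g z)" if c: "c > a + b" for c
  proof -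
    define d where "d = (c - a - b)/2"
    define a' where "a' = a + d"
    define b'' where "b'' = b + d"
    have d: "d > 0" using c by (simp add: d_def)
    have pos1: "a' > a" "b'' > b" "a' > 0" "b'' > 0" using a b d by (simp_all add: a'_def b''_def)
    have pos2: "a' + b'' = c" by (simp add: a'_def b''_def d_def)
    have pos3: "c > 0" using a b c by linarith
    note pos = pos1 pos2 pos3
    have fin1: "norm_finite a' f" and fin2: "norm_finite b'' g" using f g pos by (auto simp: A_space_def)
    define M1 where "M1 = norm_b a' f"
    define M2 where "M2 = norm_b b'' g"
    have M0: "M1 \<ge> 0" "M2 \<ge> 0" unfolding M1_def M2_def
      by (rule norm_nonneg'; use pos fin1 fin2 in auto)+
    have bf: "cmod ((deriv ^^ k) f 0) \<le> M1 * a'^k" for k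
      using coef_le_norm[OF fin1, of k] pos by (simp add: coef_seq_def M1_def pos_divide_le_eq)
    have bg: "cmod ((deriv ^^ k) g 0) \<le> M2 * b''^k" for k
      using coef_le_norm[OF fin2, of k] pos by (simp add: coef_seq_def M2_def pos_divide_le_eq)
    have "coef_seq c (\<lambda>z. f z * g z) n \<le> M1 * M2" for n
    proof -
      have "(deriv ^^ n) (\<lambda>z. f z * g z) 0 =
           (\<Sum>i = 0..n. of_nat (n choose i) * (deriv ^^ i) f 0 * (deriv ^^ (n-i)) g 0)"
        using fe ge by (intro higher_deriv_mult[where S=UNIV]) (auto simp: entire_def)
      then have "cmod ((deriv ^^ n) (\<lambda>z. f z * g z) 0) \<le>
           (\<Sum>i = 0..n. cmod (of_nat (n choose i) * (deriv ^^ i) f 0 * (deriv ^^ (n-i)) g 0))"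
        by (simp add: norm_sum)
      also have "\<dots> \<le> (\<Sum>i = 0..n. real (n choose i) * (M1 * a'^i) * (M2 * b''^(n-i)))"
      proof (rule sum_mono)
        fix i assume "i \<in> {0..n}"
        have "cmod (of_nat (n choose i) * (deriv ^^ i) f 0 * (deriv ^^ (n-i)) g 0)
            = real (n choose i) * cmod ((deriv ^^ i) f 0) * cmod ((deriv ^^ (n-i)) g 0)"
          by (simp add: norm_mult)
        also have "\<dots> \<le> real (n choose i) * (M1 * a'^i) * (M2 * b''^(n-i))"
          using bf[of i] bg[of "n-i"] M0 pos
          by (intro mult_mono mult_left_mono) auto
        finally show "cmod (of_nat (n choose i) * (deriv ^^ i) f 0 * (deriv ^^ (n-i)) g 0)
            \<le> real (n choose i) * (M1 * a'^i) * (M2 * b''^(n-i))" .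
      qed
      also have "\<dots> = M1 * M2 * (\<Sum>i\<le>n. real (n choose i) * a'^i * b''^(n-i))"
        by (simp add: sum_distrib_left atLeast0AtMost algebra_simps)
      also have "\<dots> = M1 * M2 * c^n"
        using binomial_ring[of a' b'' n] pos(5) by simp
      finally have "cmod ((deriv ^^ n) (\<lambda>z. f z * g z) 0) \<le> M1 * M2 * c^n" .
      then show ?thesis using pos by (simp add: coef_seq_def pos_divide_le_eq)
    qed
    then show ?thesis unfolding norm_finite_def by (rule bdd_aboveI2)
  qed
  moreover have "(\<lambda>z. f z * g z) \<in> entire"
    using fe ge by (auto simp: entire_def intro: holomorphic_on_mult)
  ultimately show ?thesis by (simp add: A_space_def)
qed

theorem theorem1p1:
  fixes a :: real
  assumes "a \<ge> 0"
  shows "(T_topology a) closure_of polynomials = A_space a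
    \<and> (\<forall>B. A_bounded a B \<longrightarrow>
           subtopology (T_topology a) B = subtopology compact_conv_topology B)
    \<and> (\<forall>b f g. b \<ge> 0 \<longrightarrow> f \<in> A_space a \<longrightarrow> g \<in> A_space b \<longrightarrow>
           (\<lambda>z. f z * g z) \<in> A_space (a + b))"
  using part1[OF assms] part2[OF assms] part3[OF assms] by blast

end
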